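(* Let $F_1,\dots,F_n$ be CDFs of independent nonnegative random variables $v_1,\dots,v_n$. For a positive integer $j$ and $p>0$, let $D_j(p)$ be the probability that the $j$-th highest of $v_1,\dots,v_n$ is at most $p$, i.e. the probability that at most $j-1$ of the $v_i$ exceed $p$; in particular $D_1(p)=\prod_{i=1}^nF_i(p)$. Define $\widehat D_j(p)=D_1(p)\sum_{t=0}^{j-1}\frac{1}{t!}\left(-\ln D_1(p)\right)^t$ if $D_1(p)>0$ and $\widehat D_j(p)=0$ if $D_1(p)=0$. Then for any positive integer $j$, any $\delta\le\frac{1}{4j}$ and any $p>0$ such that $F_i(p)\ge1-\delta$ for all $i$, $$D_j(p)\in\left[(1-\delta j)\,\widehat D_j(p),\ (1+2\delta j)\,\widehat D_j(p)\right].$$ *)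

theory Defs
  imports "HOL-Probability.Probability"
begin

definition rv_cdf :: "'a measure \<Rightarrow> ('a \<Rightarrow> real) \<Rightarrow> real \<Rightarrow> real" where
  "rv_cdf M X = cdf (distr M borel X)"

definition Dj :: "'a measure \<Rightarrow> (nat \<Rightarrow> 'a \<Rightarrow> real) \<Rightarrow> nat \<Rightarrow> nat \<Rightarrow> real \<Rightarrow> real" where
  "Dj M v n j p = measure M {\<omega> \<in> space M. card {i\<in>{..<n}. v i \<omega> > p} \<le> j - 1}"

definition D1 :: "'a measure \<Rightarrow> (nat \<Rightarrow> 'a \<Rightarrow> real) \<Rightarrow> nat \<Rightarrow> real \<Rightarrow> real" where
  "D1 M v n p = (\<Prod>i<n. rv_cdf M (v i) p)"

definition Dhat :: "'a measure \<Rightarrow> (nat \<Rightarrow> 'a \<Rightarrow> real) \<Rightarrow> nat \<Rightarrow> nat \<Rightarrow> real \<Rightarrow> real" where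
  "Dhat M v n j p = (if D1 M v n p > 0
     then D1 M v n p * (\<Sum>t<j. (- ln (D1 M v n p)) ^ t / fact t)
     else 0)"

end

theory Submission
  imports Defs
begin

definition Tsum :: "nat \<Rightarrow> real \<Rightarrow> real" where
  "Tsum j x = (\<Sum>t<j. x ^ t / fact t)"

definition Gsum :: "nat \<Rightarrow> (nat \<Rightarrow> real) \<Rightarrow> nat set \<Rightarrow> real" where
  "Gsum j a I = (\<Sum>S\<in>{S. S \<subseteq> I \<and> card S < j}. \<Prod>i\<in>S. a i)"

lemma Tsum_0[simp]: "Tsum 0 x = 0" by (simp add: Tsum_def)
lemma Tsum_Suc: "Tsum (Suc j) x = Tsum j x + x ^ j / fact j" by (simp add: Tsum_def)
lemma Tsum_at0: "Tsum (Suc j) 0 = 1"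
  by (induction j) (auto simp: Tsum_Suc)

lemma Tsum_nonneg: "x \<ge> 0 \<Longrightarrow> Tsum j x \<ge> 0"
  unfolding Tsum_def by (intro sum_nonneg) auto

lemma Tsum_mono_idx: "x \<ge> 0 \<Longrightarrow> k \<le> j \<Longrightarrow> Tsum k x \<le> Tsum j x"
  unfolding Tsum_def by (intro sum_mono2) auto

lemma Tsum_mono: "0 \<le> x \<Longrightarrow> x \<le> y \<Longrightarrow> Tsum j x \<le> Tsum j y"
  unfolding Tsum_def by (intro sum_mono divide_right_mono power_mono) auto

lemma bern1: "(A::real) \<ge> 0 \<Longrightarrow> h \<ge> 0 \<Longrightarrow> A ^ Suc k + real (Suc k) * h * A ^ k \<le> (A + h) ^ Suc k"
proof (induction k)
  case 0 then show ?case by simp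
next
  case (Suc k)
  have "(A + h) ^ Suc (Suc k) = (A + h) * (A + h) ^ Suc k" by simp
  also have "\<dots> \<ge> (A + h) * (A ^ Suc k + real (Suc k) * h * A ^ k)"
    using Suc by (intro mult_left_mono) auto
  finally have "(A + h) ^ Suc (Suc k) \<ge> (A + h) * (A ^ Suc k + real (Suc k) * h * A ^ k)" .
  moreover have "(A + h) * (A ^ Suc k + real (Suc k) * h * A ^ k) \<ge> A ^ Suc (Suc k) + real (Suc (Suc k)) * h * A ^ Suc k"
    using Suc.prems by (simp add: algebra_simps)
  ultimately show ?case by linarith
qed

lemma T1: assumes "A \<ge> 0" "h \<ge> 0" shows "Tsum k (A + h) \<ge> Tsum k A + h * Tsum (k - 1) A"
proof (induction k)
  case 0 then show ?case by simp
next
  case (Suc k)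
  show ?case
  proof (cases k)
    case 0 then show ?thesis by (simp add: Tsum_Suc)
  next
    case (Suc k')
    have IH: "Tsum (Suc k') (A + h) \<ge> Tsum (Suc k') A + h * Tsum k' A" using Suc.IH Suc by simp
    have b: "A ^ Suc k' + real (Suc k') * h * A ^ k' \<le> (A + h) ^ Suc k'" using bern1 assms by blast
    have "(A ^ Suc k' + real (Suc k') * h * A ^ k') / fact (Suc k') \<le> (A + h) ^ Suc k' / fact (Suc k')"
      using b by (intro divide_right_mono) auto
    moreover have "real (Suc k') * h * A ^ k' / fact (Suc k') = h * (A ^ k' / fact k')"
      by (simp add: fact_Suc del: of_nat_Suc)
    ultimately have "A ^ Suc k' / fact (Suc k') + h * (A ^ k' / fact k') \<le> (A + h) ^ Suc k' / fact (Suc k')"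
      by (simp add: add_divide_distrib)
    then show ?thesis using IH Suc by (simp add: Tsum_Suc algebra_simps)
  qed
qed

lemma bern2: "(A::real) \<ge> 0 \<Longrightarrow> h \<ge> 0 \<Longrightarrow>
  (A + h) ^ (k+2) \<le> A ^ (k+2) + real (k+2) * h * A ^ (k+1) + real ((k+2)*(k+1)) / 2 * h^2 * (A+h)^k"
proof (induction k)
  case 0 then show ?case by (simp add: power2_eq_square algebra_simps)
next
  case (Suc k)
  have "(A + h) ^ (Suc k + 2) = (A + h) * (A + h) ^ (k+2)" by simp
  also have "\<dots> \<le> (A + h) * (A ^ (k+2) + real (k+2) * h * A ^ (k+1) + real ((k+2)*(k+1)) / 2 * h^2 * (A+h)^k)"
    using Suc by (intro mult_left_mono) auto
  also have "\<dots> = A ^ (k+3) + real (k+3) * h * A^(k+2) + h^2 * (real (k+2) * A^(k+1)) + real ((k+2)*(k+1)) / 2 * h^2 * (A+h)^(k+1)"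
    by (simp add: algebra_simps power2_eq_square power_add eval_nat_numeral)
  also have "\<dots> \<le> A ^ (k+3) + real (k+3) * h * A^(k+2) + h^2 * (real (k+2) * (A+h)^(k+1)) + real ((k+2)*(k+1)) / 2 * h^2 * (A+h)^(k+1)"
    using Suc.prems by (intro add_mono mult_left_mono power_mono) auto
  also have "\<dots> = A^(k+3) + real(k+3)*h*A^(k+2) + (real((k+2)*(k+1))/2 + real(k+2)) * h^2 * (A+h)^(k+1)"
    by (simp add: algebra_simps)
  also have "real((k+2)*(k+1))/2 + real(k+2) = real((k+3)*(k+2))/2"
    by (simp add: field_simps)
  finally have "(A + h) ^ (Suc k + 2) \<le> A^(k+3) + real(k+3)*h*A^(k+2) + real((k+3)*(k+2))/2 * h^2 * (A+h)^(k+1)"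
    .
  moreover have "k + 3 = Suc k + 2" "k+2 = Suc k + 1" "k + 1 = Suc k" by simp_all
  ultimately show ?case by metis
qed

lemma T2: assumes "A \<ge> 0" "h \<ge> 0"
  shows "Tsum (k+2) (A + h) \<le> Tsum (k+2) A + h * Tsum (k+1) A + h^2 / 2 * Tsum k (A + h)"
proof (induction k)
  case 0 then show ?case by (simp add: Tsum_def power2_eq_square algebra_simps)
next
  case (Suc k)
  have b: "(A + h) ^ (k+2) / fact (k+2) \<le> (A ^ (k+2) + real (k+2) * h * A ^ (k+1) + real ((k+2)*(k+1)) / 2 * h^2 * (A+h)^k) / fact (k+2)"
    using bern2[OF assms, of k] by (intro divide_right_mono) auto
  have e: "(A ^ (k+2) + real (k+2) * h * A ^ (k+1) + real ((k+2)*(k+1)) / 2 * h^2 * (A+h)^k) / fact (k+2)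
     = A ^ (k+2) / fact (k+2) + h * (A^(k+1) / fact (k+1)) + h^2/2 * ((A+h)^k / fact k)"
  proof -
    have f: "fact (k+2) = (real (k+2) * real (k+1)) * (fact k :: real)"
      by (simp add: algebra_simps)
    have f1: "fact (k+2) = real (k+2) * (fact (k+1) :: real)"
      by simp
    have p: "fact k > (0::real)" "fact (k+1) > (0::real)" by auto
    have "real (k+2) * h * A ^ (k+1) / fact (k+2) = h * (A^(k+1) / fact (k+1))"
    proof -
      have g: "\<And>F X. F > 0 \<Longrightarrow> real (k+2) * h * X / (real (k+2) * F) = h * (X / F)" by simp
      show ?thesis unfolding f1 by (rule g) (rule p(2))
    qed
    moreover have "real ((k+2)*(k+1)) / 2 * h^2 * (A+h)^k / fact (k+2) = h^2/2 * ((A+h)^k / fact k)"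
    proof -
      have g0: "\<And>c F X. c > 0 \<Longrightarrow> F > 0 \<Longrightarrow> c / 2 * h^2 * X / (c * F) = h^2/2 * (X / F)"
        by (simp add: field_simps)
      have g: "\<And>F X. F > 0 \<Longrightarrow> real ((k+2)*(k+1)) / 2 * h^2 * X / ((real (k+2) * real (k+1)) * F) = h^2/2 * (X / F)"
        unfolding of_nat_mult[symmetric] by (rule g0) (simp del: of_nat_mult add: of_nat_mult[symmetric], assumption)
      show ?thesis unfolding f by (rule g) (rule p(1))
    qed
    ultimately show ?thesis unfolding add_divide_distrib by simp
  qed
  show ?case using Suc b e
    by (simp add: Tsum_Suc algebra_simps)
qed

lemma T3: assumes "x \<ge> 0" shows "x * Tsum k x \<le> real k * Tsum (Suc k) x"
proof (induction k)
  case 0 then show ?case by simp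
next
  case (Suc k)
  have m: "Tsum (Suc k) x \<le> Tsum (Suc (Suc k)) x" using Tsum_mono_idx assms by auto
  have e: "x * (x ^ k / fact k) = real (Suc k) * (x ^ Suc k / fact (Suc k))"
    by (simp add: fact_Suc del: of_nat_Suc)
  have "x * Tsum (Suc k) x = x * Tsum k x + real (Suc k) * (x ^ Suc k / fact (Suc k))"
    by (simp only: Tsum_Suc distrib_left e)
  also have "\<dots> \<le> real k * Tsum (Suc k) x + real (Suc k) * (x ^ Suc k / fact (Suc k))"
    using Suc by simp
  also have "\<dots> \<le> real (Suc k) * Tsum (Suc (Suc k)) x"
  proof -
    have "real (Suc k) * Tsum (Suc (Suc k)) x = real k * Tsum (Suc k) x + Tsum (Suc k) x + real (Suc k) * (x^Suc k/fact(Suc k))"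
      by (simp only: Tsum_Suc[of "Suc k"]) (simp add: algebra_simps)
    then show ?thesis using Tsum_nonneg[OF assms, of "Suc k"] by linarith
  qed
  finally show ?case .
qed

lemma Gsum_0[simp]: "Gsum 0 a I = 0" by (simp add: Gsum_def)

lemma Gsum_1: assumes "finite I" shows "Gsum (Suc 0) a I = 1"
proof -
  have "{S. S \<subseteq> I \<and> card S < Suc 0} = {{}}"
  proof (intro equalityI subsetI)
    fix S assume "S \<in> {S. S \<subseteq> I \<and> card S < Suc 0}"
    then have "S \<subseteq> I" "card S = 0" by auto
    moreover have "finite S" using \<open>S \<subseteq> I\<close> assms finite_subset by blast
    ultimately show "S \<in> {{}}" by simp
  qed auto
  then show ?thesis by (simp add: Gsum_def)
qed

lemma Gsum_empty: "Gsum j a {} = Tsum j 0"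
proof (cases j)
  case 0 then show ?thesis by simp
next
  case (Suc k)
  have e: "{S. S \<subseteq> {} \<and> card S < Suc k} = {{}}" by auto
  have "Gsum (Suc k) a {} = 1" unfolding Gsum_def e by simp
  then show ?thesis using Tsum_at0[of k] Suc by simp
qed

lemma Gsum_nonneg: "(\<forall>i\<in>I. a i \<ge> 0) \<Longrightarrow> Gsum j a I \<ge> 0"
  unfolding Gsum_def by (intro sum_nonneg prod_nonneg) auto

lemma Gsum_mono: "finite I \<Longrightarrow> (\<forall>i\<in>I. 0 \<le> a i \<and> a i \<le> b i) \<Longrightarrow> Gsum j a I \<le> Gsum j b I"
  unfolding Gsum_def by (intro sum_mono prod_mono) auto

lemma Gsum_insert:
  assumes "finite I" "x \<notin> I"
  shows "Gsum (Suc k) a (insert x I) = Gsum (Suc k) a I + a x * Gsum k a I"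
proof -
  let ?A = "{S. S \<subseteq> I \<and> card S < Suc k}"
  let ?C = "{S. S \<subseteq> I \<and> card S < k}"
  have fA: "finite ?A" using assms(1) by (rule finite_subset[rotated, OF finite_Pow_iff[THEN iffD2]]) auto
  have fC: "finite ?C" using assms(1) by (rule finite_subset[rotated, OF finite_Pow_iff[THEN iffD2]]) auto
  have eq: "{S. S \<subseteq> insert x I \<and> card S < Suc k} = ?A \<union> insert x ` ?C"
  proof (intro equalityI subsetI)
    fix S assume S: "S \<in> {S. S \<subseteq> insert x I \<and> card S < Suc k}"
    show "S \<in> ?A \<union> insert x ` ?C"
    proof (cases "x \<in> S")
      case True
      have fS: "finite S" using S assms(1) by (auto intro: finite_subset)
      have eqS: "S = insert x (S - {x})" using True by auto
      have c0: "card S \<noteq> 0" using True fS by auto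
      have c1: "card (S - {x}) = card S - 1" using True by (simp add: card_Diff_singleton)
      have c2: "S - {x} \<subseteq> I" using S by auto
      have "card S < Suc k" using S by simp
      then have "card (S - {x}) < k" using c0 c1 by linarith
      then have "S - {x} \<in> ?C" using c2 by simp
      then have "S \<in> insert x ` ?C" using eqS by (rule rev_image_eqI)
      then show ?thesis by (rule UnI2)
    next
      case False then show ?thesis using S by auto
    qed
  next
    fix S assume "S \<in> ?A \<union> insert x ` ?C"
    then show "S \<in> {S. S \<subseteq> insert x I \<and> card S < Suc k}"
    proof
      assume "S \<in> ?A" then show ?thesis by auto
    next
      assume "S \<in> insert x ` ?C"
      then obtain T where T: "T \<subseteq> I" "card T < k" "S = insert x T" by auto
      have "finite T" using T assms(1) by (auto intro: finite_subset)
      moreover have "x \<notin> T" using T assms(2) by blast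
      ultimately have "card S = Suc (card T)" using T by simp
      then show ?thesis using T by auto
    qed
  qed
  have disj: "?A \<inter> insert x ` ?C = {}" using assms(2) by auto
  have inj: "inj_on (insert x) ?C"
    unfolding inj_on_def using assms(2) by (metis (no_types, lifting) in_mono insert_ident mem_Collect_eq)
  have "Gsum (Suc k) a (insert x I) = (\<Sum>S\<in>?A. \<Prod>i\<in>S. a i) + (\<Sum>S\<in>insert x ` ?C. \<Prod>i\<in>S. a i)"
    unfolding Gsum_def eq using fA fC disj by (intro sum.union_disjoint) auto
  also have "(\<Sum>S\<in>insert x ` ?C. \<Prod>i\<in>S. a i) = (\<Sum>S\<in>?C. \<Prod>i\<in>insert x S. a i)"
    using inj by (simp add: sum.reindex)
  also have "\<dots> = (\<Sum>S\<in>?C. a x * (\<Prod>i\<in>S. a i))"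
  proof (rule sum.cong)
    fix S assume "S \<in> ?C"
    then have "finite S" "x \<notin> S" using assms by (auto intro: finite_subset)
    then show "(\<Prod>i\<in>insert x S. a i) = a x * (\<Prod>i\<in>S. a i)" by simp
  qed simp
  also have "\<dots> = a x * Gsum k a I" unfolding Gsum_def by (simp add: sum_distrib_left)
  finally show ?thesis unfolding Gsum_def by simp
qed

lemma Gsum_upper:
  assumes "finite I" "\<forall>i\<in>I. a i \<ge> 0"
  shows "Gsum j a I \<le> Tsum j (sum a I)"
  using assms
proof (induction I arbitrary: j rule: finite_induct)
  case empty then show ?case by (simp add: Gsum_empty)
next
  case (insert x I)
  show ?case
  proof (cases j)
    case 0 then show ?thesis by simp
  next
    case (Suc k)
    have ax: "a x \<ge> 0" and A: "sum a I \<ge> 0" using insert.prems by (auto intro: sum_nonneg)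
    have "Gsum j a (insert x I) = Gsum (Suc k) a I + a x * Gsum k a I"
      using Suc Gsum_insert insert.hyps by simp
    also have "\<dots> \<le> Tsum (Suc k) (sum a I) + a x * Tsum k (sum a I)"
      using insert.IH insert.prems ax by (intro add_mono mult_left_mono) auto
    also have "\<dots> \<le> Tsum (Suc k) (sum a I + a x)"
      using T1[OF A ax, of "Suc k"] by simp
    finally show ?thesis using Suc insert.hyps by (simp add: add.commute)
  qed
qed

lemma Gsum_lower:
  assumes "finite I" "\<forall>i\<in>I. 0 \<le> a i \<and> a i \<le> m"
  shows "Tsum j (sum a I) - m / 2 * sum a I * Tsum (j - 2) (sum a I) \<le> Gsum j a I"
  using assms
proof (induction I arbitrary: j rule: finite_induct)
  case empty then show ?case by (simp add: Gsum_empty)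
next
  case (insert x I)
  define A where "A = sum a I"
  define h where "h = a x"
  have h: "0 \<le> h" "h \<le> m" and A: "A \<ge> 0" using insert.prems by (auto simp: h_def A_def intro: sum_nonneg)
  have sA: "sum a (insert x I) = A + h" using insert.hyps by (simp add: A_def h_def add.commute)
  show ?case
  proof (cases j)
    case 0 then show ?thesis by simp
  next
    case (Suc k0)
    show ?thesis
    proof (cases k0)
      case 0
      then show ?thesis using Suc Gsum_1 insert.hyps by (simp add: Tsum_def)
    next
      case (Suc k)
      have j: "j = k + 2" using Suc \<open>j = Suc k0\<close> by simp
      have IH1: "Tsum (k+2) A - m / 2 * A * Tsum k A \<le> Gsum (k+2) a I"
        using insert.IH[of "k+2"] insert.prems by (simp add: A_def)
      have IH2: "Tsum (k+1) A - m / 2 * A * Tsum (k - 1) A \<le> Gsum (k+1) a I"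
        using insert.IH[of "k+1"] insert.prems by (simp add: A_def)
      have rec: "Gsum (k+2) a (insert x I) = Gsum (k+2) a I + h * Gsum (k+1) a I"
        using Gsum_insert[OF insert.hyps, of "k+1" a] by (simp add: h_def)
      have t2: "Tsum (k+2) (A + h) \<le> Tsum (k+2) A + h * Tsum (k+1) A + h^2 / 2 * Tsum k (A + h)"
        by (rule T2[OF A h(1)])
      have t1: "Tsum k (A + h) \<ge> Tsum k A + h * Tsum (k - 1) A" by (rule T1[OF A h(1)])
      have tn: "Tsum k (A + h) \<ge> 0" using A h by (intro Tsum_nonneg) simp
      have hh: "h^2 / 2 * Tsum k (A + h) \<le> m / 2 * h * Tsum k (A + h)"
        using h tn by (simp add: power2_eq_square mult_right_mono mult_left_mono)
      have m0: "m \<ge> 0" using h by simp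
      have p1: "h * (Tsum (k+1) A - m / 2 * A * Tsum (k - 1) A) \<le> h * Gsum (k+1) a I"
        using IH2 h by (intro mult_left_mono) auto
      have p2: "m / 2 * A * (Tsum k A + h * Tsum (k - 1) A) \<le> m / 2 * A * Tsum k (A + h)"
        using t1 m0 A by (intro mult_left_mono) auto
      have "Tsum (k+2) (A + h) - m / 2 * (A + h) * Tsum k (A + h) \<le> Gsum (k+2) a (insert x I)"
      proof -
        have e1: "h * (Tsum (k+1) A - m/2*A*Tsum (k-1) A) = h*Tsum(k+1) A - (m/2*A)*(h*Tsum (k-1) A)"
          by (simp add: algebra_simps)
        have e2: "m/2*A*(Tsum k A + h*Tsum(k-1) A) = m/2*A*Tsum k A + (m/2*A)*(h*Tsum (k-1) A)"
          by (simp add: algebra_simps)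
        have e3: "m/2*(A+h)*Tsum k (A+h) = m/2*A*Tsum k (A+h) + m/2*h*Tsum k (A+h)"
          by (simp add: algebra_simps)
        have p1': "h*Tsum(k+1) A - (m/2*A)*(h*Tsum (k-1) A) \<le> h * Gsum (k+1) a I" using p1 e1 by simp
        have p2': "m/2*A*Tsum k A + (m/2*A)*(h*Tsum (k-1) A) \<le> m / 2 * A * Tsum k (A + h)" using p2 e2 by simp
        have "Tsum (k+2) (A + h) - (m/2*A*Tsum k (A+h) + m/2*h*Tsum k (A+h)) \<le> Gsum (k+2) a I + h * Gsum (k+1) a I"
          using IH1 p1' p2' t2 hh by linarith
        then show ?thesis unfolding rec e3 .
      qed
      then show ?thesis using j sA by simp
    qed
  qed
qed

lemma T4: assumes "c \<ge> 1" "L \<ge> 0" shows "Tsum j (c * L) \<le> c ^ (j - 1) * Tsum j L"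
proof -
  have "Tsum j (c * L) = (\<Sum>t<j. c ^ t * (L ^ t / fact t))"
    unfolding Tsum_def by (simp add: power_mult_distrib)
  also have "\<dots> \<le> (\<Sum>t<j. c ^ (j - 1) * (L ^ t / fact t))"
    using assms by (intro sum_mono mult_right_mono power_increasing) auto
  also have "\<dots> = c ^ (j - 1) * Tsum j L" unfolding Tsum_def by (simp add: sum_distrib_left)
  finally show ?thesis .
qed

lemma main_alg:
  fixes F :: "nat \<Rightarrow> real" and I :: "nat set"
  assumes fin: "finite I" and j: "j \<ge> 1" and d0: "0 \<le> \<delta>" and dj: "\<delta> \<le> 1 / (4 * real j)"
    and F: "\<forall>i\<in>I. 1 - \<delta> \<le> F i \<and> F i \<le> 1"
  shows "(1 - \<delta> * real j) * (prod F I * Tsum j (- ln (prod F I))) \<le> prod F I * Gsum j (\<lambda>i. (1 - F i) / F i) I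
     \<and> prod F I * Gsum j (\<lambda>i. (1 - F i) / F i) I \<le> (1 + 2 * \<delta> * real j) * (prod F I * Tsum j (- ln (prod F I)))"
proof -
  define r where "r = (\<lambda>i. (1 - F i) / F i)"
  define l where "l = (\<lambda>i. - ln (F i))"
  define D where "D = prod F I"
  define L where "L = - ln D"
  define m where "m = \<delta> / (1 - \<delta>)"
  have jpos: "real j \<ge> 1" using j by simp
  have xj: "\<delta> * real j \<le> 1/4" using dj jpos by (simp add: field_simps)
  have d4: "\<delta> \<le> 1/4" using xj jpos d0 by (smt (verit) mult_le_cancel_left1)
  have Fpos: "\<And>i. i \<in> I \<Longrightarrow> F i > 0" using F d4 by force
  have Dpos: "D > 0" unfolding D_def using Fpos by (intro prod_pos) auto
  have L: "L = sum l I"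
  proof -
    have "ln (prod F I) = (\<Sum>i\<in>I. ln (F i))" using Fpos by (intro ln_prod[OF fin]) force
    then show ?thesis unfolding L_def D_def l_def by (simp add: sum_negf)
  qed
  have l0: "\<And>i. i \<in> I \<Longrightarrow> 0 \<le> l i" unfolding l_def using F Fpos by simp
  have ql: "\<And>i. i \<in> I \<Longrightarrow> 1 - F i \<le> l i" unfolding l_def using ln_le_minus_one Fpos by force
  have lr: "\<And>i. i \<in> I \<Longrightarrow> l i \<le> r i"
  proof -
    fix i assume i: "i \<in> I"
    have "ln (1 / F i) \<le> 1 / F i - 1" using ln_le_minus_one Fpos[OF i] by simp
    then show "l i \<le> r i" unfolding l_def r_def using Fpos[OF i] by (simp add: ln_div field_simps)
  qed
  have rm: "\<And>i. i \<in> I \<Longrightarrow> r i \<le> m"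
    unfolding r_def m_def using F d4 Fpos by (intro frac_le) auto
  have rl: "\<And>i. i \<in> I \<Longrightarrow> r i \<le> l i / (1 - \<delta>)"
  proof -
    fix i assume i: "i \<in> I"
    have "(1 - F i) / F i \<le> (1 - F i) / (1 - \<delta>)" using F i Fpos[OF i] d4 by (intro divide_left_mono) auto
    also have "\<dots> \<le> l i / (1 - \<delta>)" using ql[OF i] d4 by (intro divide_right_mono) auto
    finally show "r i \<le> l i / (1 - \<delta>)" unfolding r_def .
  qed
  have L0: "L \<ge> 0" unfolding L using l0 by (intro sum_nonneg) auto
  have "Gsum j r I \<ge> Gsum j l I" using fin l0 lr by (intro Gsum_mono) auto
  moreover have "Gsum j l I \<ge> Tsum j L - m / 2 * L * Tsum (j - 2) L"
    unfolding L using Gsum_lower[OF fin, of l m] l0 lr rm by force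
  moreover have "m / 2 * L * Tsum (j - 2) L \<le> \<delta> * (real j * Tsum j L)"
  proof -
    have dd: "\<delta> * (\<delta> * 2) \<le> \<delta> * 1" using d0 d4 by (intro mult_left_mono) auto
    have m2: "m / 2 \<le> \<delta>" "0 \<le> m / 2" unfolding m_def using d0 d4 dd by (auto simp: field_simps)
    have "L * Tsum (j - 2) L \<le> real (j - 2) * Tsum (Suc (j - 2)) L" by (rule T3[OF L0])
    also have "\<dots> \<le> real j * Tsum j L"
      using Tsum_nonneg[OF L0] Tsum_mono_idx[OF L0, of "Suc (j - 2)" j] j
      by (intro mult_mono) auto
    finally have c1: "L * Tsum (j - 2) L \<le> real j * Tsum j L" .
    have c2: "0 \<le> L * Tsum (j - 2) L" using L0 Tsum_nonneg[OF L0] by simp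
    have "m / 2 * (L * Tsum (j - 2) L) \<le> \<delta> * (real j * Tsum j L)"
      by (rule mult_mono[OF m2(1) c1 d0 c2])
    then show ?thesis by (simp add: mult.assoc)
  qed
  ultimately have low: "(1 - \<delta> * real j) * Tsum j L \<le> Gsum j r I" by (simp add: algebra_simps)
  have "Gsum j r I \<le> Tsum j (sum r I)"
    using Gsum_upper[OF fin, of r] l0 lr by force
  also have "\<dots> \<le> Tsum j ((1 / (1 - \<delta>)) * L)"
  proof (rule Tsum_mono)
    show "0 \<le> sum r I" using l0 lr by (intro sum_nonneg) force
    have "sum r I \<le> sum (\<lambda>i. l i / (1 - \<delta>)) I" using rl by (intro sum_mono) auto
    then show "sum r I \<le> (1 / (1 - \<delta>)) * L" unfolding L by (simp add: sum_divide_distrib)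
  qed
  also have "\<dots> \<le> (1 / (1 - \<delta>)) ^ (j - 1) * Tsum j L"
    using d0 d4 L0 by (intro T4) auto
  also have "(1 / (1 - \<delta>)) ^ (j - 1) \<le> 1 + 2 * \<delta> * real j"
  proof -
    have b: "1 + real (j - 1) * (- \<delta>) \<le> (1 + - \<delta>) ^ (j - 1)"
      using d4 by (intro Bernoulli_inequality) auto
    have b': "1 - real (j - 1) * \<delta> \<le> (1 - \<delta>) ^ (j - 1)" using b by simp
    have "real (j - 1) * \<delta> \<le> real j * \<delta>" using d0 by (intro mult_right_mono) auto
    then have "1 - \<delta> * real j \<le> (1 - \<delta>) ^ (j - 1)" using b' by (simp add: mult.commute)
    moreover have "1 - \<delta> * real j > 0" using xj by simp
    ultimately have "(1 / (1 - \<delta>)) ^ (j - 1) \<le> 1 / (1 - \<delta> * real j)"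
      by (simp add: power_one_over frac_le)
    also have "\<dots> \<le> 1 + 2 * \<delta> * real j"
    proof -
      define x where "x = \<delta> * real j"
      have x0: "0 \<le> x" unfolding x_def using d0 by simp
      have "0 \<le> x * (1 - 2 * x)" using x0 xj unfolding x_def[symmetric] by (intro mult_nonneg_nonneg) auto
      moreover have "(1 + 2 * x) * (1 - x) = 1 + x * (1 - 2 * x)" by (simp add: algebra_simps)
      ultimately have "1 \<le> (1 + 2 * x) * (1 - x)" by linarith
      then have "1 \<le> (1 + 2 * (\<delta> * real j)) * (1 - \<delta> * real j)" unfolding x_def .
      then show ?thesis using \<open>1 - \<delta> * real j > 0\<close> by (simp add: field_simps)
    qed
    finally show ?thesis .
  qed
  finally have up: "Gsum j r I \<le> (1 + 2 * \<delta> * real j) * Tsum j L"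
    using Tsum_nonneg[OF L0] by (simp add: mult_right_mono)
  have a1: "D * ((1 - \<delta> * real j) * Tsum j L) \<le> D * Gsum j r I" using low Dpos by (intro mult_left_mono) auto
  have a2: "D * Gsum j r I \<le> D * ((1 + 2 * \<delta> * real j) * Tsum j L)" using up Dpos by (intro mult_left_mono) auto
  have "(1 - \<delta> * real j) * (D * Tsum j L) \<le> D * Gsum j r I \<and> D * Gsum j r I \<le> (1 + 2 * \<delta> * real j) * (D * Tsum j L)"
    using a1 a2 by (simp add: mult.left_commute)
  then show ?thesis unfolding r_def D_def L_def .
qed


lemma rv_cdf_eq:
  assumes "X \<in> borel_measurable M"
  shows "rv_cdf M X p = measure M (X -` {..p} \<inter> space M)"
  unfolding rv_cdf_def cdf_def using assms by (simp add: measure_distr)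

lemma Dj_formula:
  assumes P: "prob_space M" and n: "n \<ge> 1"
    and meas: "\<forall>i<n. v i \<in> borel_measurable M"
    and ind: "prob_space.indep_vars M (\<lambda>_. borel) v {..<n}"
  shows "Dj M v n j p = (\<Sum>S\<in>{S. S \<subseteq> {..<n} \<and> card S \<le> j - 1}.
            \<Prod>i<n. (if i \<in> S then 1 - rv_cdf M (v i) p else rv_cdf M (v i) p))"
proof -
  interpret prob_space M by (rule P)
  define \<S> where "\<S> = {S. S \<subseteq> {..<n} \<and> card S \<le> j - 1}"
  define B where "B = (\<lambda>S i. v i -` (if i \<in> S then {p<..} else {..p}) \<inter> space M)"
  define E where "E = (\<lambda>S. {\<omega> \<in> space M. \<forall>i<n. (p < v i \<omega>) = (i \<in> S)})"
  have finS: "finite \<S>" unfolding \<S>_def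
    by (rule finite_subset[of _ "Pow {..<n}"]) auto
  have Bev: "\<And>S i. i < n \<Longrightarrow> B S i \<in> events"
    unfolding B_def using meas by (auto intro: measurable_sets)
  have EB: "\<And>S. E S = (\<Inter>i\<in>{..<n}. B S i)"
  proof -
    fix S
    have ne: "{..<n} \<noteq> {}" using n by (auto simp: lessThan_empty_iff)
    show "E S = (\<Inter>i\<in>{..<n}. B S i)"
    proof (intro equalityI subsetI)
      fix \<omega> assume w: "\<omega> \<in> E S"
      show "\<omega> \<in> (\<Inter>i\<in>{..<n}. B S i)"
      proof
        fix i assume i: "i \<in> {..<n}"
        then have "(p < v i \<omega>) = (i \<in> S)" "\<omega> \<in> space M" using w unfolding E_def by auto
        then show "\<omega> \<in> B S i" unfolding B_def by (cases "i \<in> S") auto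
      qed
    next
      fix \<omega> assume w: "\<omega> \<in> (\<Inter>i\<in>{..<n}. B S i)"
      have sp: "\<omega> \<in> space M" using w ne B_def by blast
      have "\<forall>i<n. (p < v i \<omega>) = (i \<in> S)"
      proof (intro allI impI)
        fix i assume "i < n"
        then have "\<omega> \<in> B S i" using w by auto
        then show "(p < v i \<omega>) = (i \<in> S)" unfolding B_def by (cases "i \<in> S") auto
      qed
      then show "\<omega> \<in> E S" unfolding E_def using sp by blast
    qed
  qed
  have Eev: "\<And>S. E S \<in> events"
    unfolding EB using Bev n by (intro sets.finite_INT) (auto simp: lessThan_empty_iff)
  have ev: "{\<omega> \<in> space M. card {i\<in>{..<n}. v i \<omega> > p} \<le> j - 1} = (\<Union>S\<in>\<S>. E S)"
  proof (intro equalityI subsetI)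
    fix \<omega> assume w: "\<omega> \<in> {\<omega> \<in> space M. card {i\<in>{..<n}. v i \<omega> > p} \<le> j - 1}"
    then have "{i\<in>{..<n}. v i \<omega> > p} \<in> \<S>" "\<omega> \<in> E {i\<in>{..<n}. v i \<omega> > p}"
      unfolding \<S>_def E_def by auto
    then show "\<omega> \<in> (\<Union>S\<in>\<S>. E S)" by blast
  next
    fix \<omega> assume "\<omega> \<in> (\<Union>S\<in>\<S>. E S)"
    then obtain S where S: "S \<in> \<S>" "\<omega> \<in> E S" by blast
    then have "{i\<in>{..<n}. v i \<omega> > p} = S" unfolding \<S>_def E_def by auto
    then show "\<omega> \<in> {\<omega> \<in> space M. card {i\<in>{..<n}. v i \<omega> > p} \<le> j - 1}"
      using S unfolding \<S>_def E_def by auto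
  qed
  have disj: "disjoint_family_on E \<S>"
    unfolding disjoint_family_on_def
  proof (intro ballI impI)
    fix S T assume ST: "S \<in> \<S>" "T \<in> \<S>" "S \<noteq> T"
    show "E S \<inter> E T = {}"
    proof (rule ccontr)
      assume "E S \<inter> E T \<noteq> {}"
      then obtain \<omega> where "\<omega> \<in> E S" "\<omega> \<in> E T" by blast
      then have "\<forall>i<n. (i \<in> S) = (i \<in> T)" unfolding E_def by auto
      then have "S = T" using ST unfolding \<S>_def by auto
      then show False using ST by simp
    qed
  qed
  have "Dj M v n j p = prob (\<Union>S\<in>\<S>. E S)" unfolding Dj_def ev ..
  also have "\<dots> = (\<Sum>S\<in>\<S>. prob (E S))"
    using finS Eev disj by (intro measure_finite_Union) auto
  also have "\<dots> = (\<Sum>S\<in>\<S>. \<Prod>i<n. (if i \<in> S then 1 - rv_cdf M (v i) p else rv_cdf M (v i) p))"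
  proof (rule sum.cong)
    fix S assume "S \<in> \<S>"
    have ind2: "indep_sets (\<lambda>i. { v i -` A \<inter> space M | A. A \<in> sets borel}) {..<n}"
      using ind unfolding indep_vars_def2 by simp
    have "prob (E S) = prob (\<Inter>i\<in>{..<n}. B S i)" by (simp add: EB)
    also have "\<dots> = (\<Prod>i\<in>{..<n}. prob (B S i))"
    proof (rule indep_setsD[OF ind2])
      show "{..<n} \<noteq> {}" using n by (auto simp: lessThan_empty_iff)
      show "\<forall>i\<in>{..<n}. B S i \<in> {v i -` A \<inter> space M |A. A \<in> sets borel}"
      proof
        fix i assume "i \<in> {..<n}"
        have "(if i \<in> S then {p<..} else {..p}) \<in> sets (borel :: real measure)" by auto
        then show "B S i \<in> {v i -` A \<inter> space M |A. A \<in> sets borel}" unfolding B_def by blast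
      qed
    qed auto
    also have "\<dots> = (\<Prod>i<n. (if i \<in> S then 1 - rv_cdf M (v i) p else rv_cdf M (v i) p))"
    proof (rule prod.cong)
      fix i assume i: "i \<in> {..<n}"
      have vm: "v i \<in> borel_measurable M" using meas i by auto
      have ev1: "v i -` {..p} \<inter> space M \<in> events" using vm by (auto intro: measurable_sets)
      show "prob (B S i) = (if i \<in> S then 1 - rv_cdf M (v i) p else rv_cdf M (v i) p)"
      proof (cases "i \<in> S")
        case True
        have "B S i = space M - (v i -` {..p} \<inter> space M)" unfolding B_def using True by auto
        then show ?thesis using True prob_compl[OF ev1] rv_cdf_eq[OF vm] by simp
      next
        case False
        then show ?thesis unfolding B_def using rv_cdf_eq[OF vm] by simp
      qed
    qed simp
    finally show "prob (E S) = (\<Prod>i<n. (if i \<in> S then 1 - rv_cdf M (v i) p else rv_cdf M (v i) p))" .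
  qed simp
  finally show ?thesis unfolding \<S>_def .
qed


theorem proposition3p11:
  fixes M :: "'a measure" and v :: "nat \<Rightarrow> 'a \<Rightarrow> real"
    and n j :: nat and \<delta> p :: real
  assumes "prob_space M"
    and "n \<ge> 1"
    and "\<forall>i<n. v i \<in> borel_measurable M"
    and "prob_space.indep_vars M (\<lambda>_. borel) v {..<n}"
    and "\<forall>i<n. \<forall>\<omega>\<in>space M. 0 \<le> v i \<omega>"
    and "j \<ge> 1"
    and "\<delta> \<le> 1 / (4 * real j)"
    and "p > 0"
    and "\<forall>i<n. rv_cdf M (v i) p \<ge> 1 - \<delta>"
  shows "(1 - \<delta> * real j) * Dhat M v n j p \<le> Dj M v n j p
       \<and> Dj M v n j p \<le> (1 + 2 * \<delta> * real j) * Dhat M v n j p"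
proof -
  interpret prob_space M by (rule assms(1))
  define F where "F = (\<lambda>i. rv_cdf M (v i) p)"
  define I where "I = {..<n::nat}"
  define D where "D = prod F I"
  have finI: "finite I" unfolding I_def by simp
  have F1: "\<And>i. i \<in> I \<Longrightarrow> F i \<le> 1"
    unfolding F_def I_def using assms(3) by (auto simp: rv_cdf_eq)
  have Fd: "\<And>i. i \<in> I \<Longrightarrow> 1 - \<delta> \<le> F i" unfolding F_def I_def using assms(9) by auto
  have "0 \<in> I" unfolding I_def using assms(2) by auto
  then have d0: "0 \<le> \<delta>" using F1 Fd by force
  have jr: "real j \<ge> 1" using assms(6) by simp
  have d4: "\<delta> \<le> 1/4" using assms(7) jr
    by (smt (verit, best) divide_left_mono mult_left_mono mult_pos_pos)
  have Fpos: "\<And>i. i \<in> I \<Longrightarrow> F i > 0" using Fd d4 by force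
  have Dpos: "D > 0" unfolding D_def using Fpos by (intro prod_pos) auto
  have D1: "D1 M v n p = D" unfolding D1_def D_def F_def I_def ..
  have Dhat: "Dhat M v n j p = D * Tsum j (- ln D)"
    unfolding Dhat_def D1 Tsum_def using Dpos by simp
  have sets: "{S. S \<subseteq> I \<and> card S \<le> j - 1} = {S. S \<subseteq> I \<and> card S < j}"
    using assms(6) by auto
  have "Dj M v n j p = (\<Sum>S\<in>{S. S \<subseteq> I \<and> card S \<le> j - 1}.
            \<Prod>i\<in>I. (if i \<in> S then 1 - F i else F i))"
    unfolding I_def F_def by (rule Dj_formula[OF assms(1-4)])
  also have "\<dots> = (\<Sum>S\<in>{S. S \<subseteq> I \<and> card S < j}. D * (\<Prod>i\<in>S. (1 - F i) / F i))"
    unfolding sets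
  proof (rule sum.cong)
    fix S assume "S \<in> {S. S \<subseteq> I \<and> card S < j}"
    then have SI: "S \<subseteq> I" by simp
    have a: "(\<Prod>i\<in>I. (if i \<in> S then 1 - F i else F i)) = prod (\<lambda>i. 1 - F i) S * prod F (I - S)"
    proof -
      have "(\<Prod>i\<in>I. (if i \<in> S then 1 - F i else F i)) = prod (\<lambda>i. 1 - F i) (I \<inter> {i. i \<in> S}) * prod F (I \<inter> - {i. i \<in> S})"
        by (rule prod.If_cases[OF finI])
      moreover have "I \<inter> {i. i \<in> S} = S" "I \<inter> - {i. i \<in> S} = I - S" using SI by auto
      ultimately show ?thesis by simp
    qed
    have pS0: "prod F S > 0" using Fpos SI by (intro prod_pos) force
    then have pS: "prod F S \<noteq> 0" by simp
    have b: "D = prod F (I - S) * prod F S" unfolding D_def by (rule prod.subset_diff[OF SI finI])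
    show "(\<Prod>i\<in>I. (if i \<in> S then 1 - F i else F i)) = D * (\<Prod>i\<in>S. (1 - F i) / F i)"
      unfolding a b prod_dividef using pS by (simp add: field_simps)
  qed simp
  also have "\<dots> = D * Gsum j (\<lambda>i. (1 - F i) / F i) I"
    unfolding Gsum_def by (simp add: sum_distrib_left)
  finally have Dj: "Dj M v n j p = D * Gsum j (\<lambda>i. (1 - F i) / F i) I" .
  have "(1 - \<delta> * real j) * (prod F I * Tsum j (- ln (prod F I))) \<le> prod F I * Gsum j (\<lambda>i. (1 - F i) / F i) I
     \<and> prod F I * Gsum j (\<lambda>i. (1 - F i) / F i) I \<le> (1 + 2 * \<delta> * real j) * (prod F I * Tsum j (- ln (prod F I)))"
    using F1 Fd by (intro main_alg[OF finI assms(6) d0 assms(7)]) auto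
  then show ?thesis unfolding Dj Dhat D_def .
qed

end
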